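(* Let $A$ be a finite set, let $X,Y$ be upward closed subsets of $(A^*,\le_e)$, and let $a\in A$. Then: (1) $X \subseteq a^{-1}X$. (2) If $a \in \operatorname{Som}(X)$, then $X \subsetneq a^{-1}X$. (3) If $X \neq A^*$ and for all $b\in\operatorname{Som}(X)$ we have $b^{-1}X \subseteq b^{-1}Y$, then $X\subseteq Y$.
   Context: $A^*$ is the set of finite words over $A$. The embedding order $\le_e$ is defined by recursion on the length of $x$: the empty word satisfies $\emptyset \le_e y$ for all $y$; if $x = au$ with $a\in A$, $u\in A^*$, then $x\le_e y$ iff there are $v,w\in A^*$ with $y=vaw$ and $u\le_e w$. A subset $X$ is upward closed if $x\in X$, $x\le_e y$ imply $y\in X$. For $X\subseteq A^*$ and $a\in A$, $a^{-1}X := \{y\in A^* \mid ay\in X\}$, and $\operatorname{Som}(X) := \{a\in A \mid \exists u\in A^*: au \text{ is a minimal element of } X \text{ with respect to } \le_e\}$. *)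

theory Defs
  imports Main "HOL-Library.Sublist"
begin

text \<open>Words over the alphabet A are the lists in lists A; the embedding order
  is the subsequence order subseq from HOL-Library.Sublist.\<close>

definition upward_closed :: "'a set \<Rightarrow> 'a list set \<Rightarrow> bool" where
  "upward_closed A X \<longleftrightarrow> X \<subseteq> lists A \<and>
     (\<forall>x y. x \<in> X \<longrightarrow> y \<in> lists A \<longrightarrow> subseq x y \<longrightarrow> y \<in> X)"

definition lquot :: "'a set \<Rightarrow> 'a \<Rightarrow> 'a list set \<Rightarrow> 'a list set" where
  "lquot A a X = {y \<in> lists A. a # y \<in> X}"

definition emb_minimal :: "'a list set \<Rightarrow> 'a list \<Rightarrow> bool" where
  "emb_minimal X x \<longleftrightarrow> x \<in> X \<and> (\<forall>y\<in>X. subseq y x \<longrightarrow> y = x)"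

definition Som :: "'a set \<Rightarrow> 'a list set \<Rightarrow> 'a set" where
  "Som A X = {a \<in> A. \<exists>u \<in> lists A. emb_minimal X (a # u)}"

end

theory Submission
  imports Defs
begin

lemma exists_min:
  "x \<in> X \<Longrightarrow> \<exists>m. emb_minimal X m \<and> subseq m x"
proof (induction "length x" arbitrary: x rule: less_induct)
  case less
  show ?case
  proof (cases "emb_minimal X x")
    case True then show ?thesis by auto
  next
    case False
    then obtain y where y: "y \<in> X" "subseq y x" "y \<noteq> x"
      using less.prems unfolding emb_minimal_def by blast
    have "length y < length x"
      using y list_emb_length subseq_same_length by (metis le_neq_implies_less)
    then obtain m where "emb_minimal X m" "subseq m y" using less y by blast
    then show ?thesis using y subseq_order.trans by blast
  qed
qed

theorem lemma5p1:
  fixes A :: "'a set" and X Y :: "'a list set" and a :: 'a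
  assumes "finite A"
    and "upward_closed A X" and "upward_closed A Y"
    and "a \<in> A"
  shows "X \<subseteq> lquot A a X
    \<and> (a \<in> Som A X \<longrightarrow> X \<subset> lquot A a X)
    \<and> ((X \<noteq> lists A \<and> (\<forall>b\<in>Som A X. lquot A b X \<subseteq> lquot A b Y)) \<longrightarrow> X \<subseteq> Y)"
proof -
  have XA: "X \<subseteq> lists A" using assms(2) unfolding upward_closed_def by blast
  have upX: "\<And>x y. x \<in> X \<Longrightarrow> y \<in> lists A \<Longrightarrow> subseq x y \<Longrightarrow> y \<in> X"
    using assms(2) unfolding upward_closed_def by blast
  have upY: "\<And>x y. x \<in> Y \<Longrightarrow> y \<in> lists A \<Longrightarrow> subseq x y \<Longrightarrow> y \<in> Y"
    using assms(3) unfolding upward_closed_def by blast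
  have P1: "X \<subseteq> lquot A a X"
  proof
    fix x assume x: "x \<in> X"
    then have "x \<in> lists A" using XA by blast
    then have "a # x \<in> lists A" using assms(4) by simp
    moreover have "subseq x (a # x)" by (simp add: list_emb_Cons)
    ultimately have "a # x \<in> X" using upX[OF x] by blast
    then show "x \<in> lquot A a X" using \<open>x \<in> lists A\<close> unfolding lquot_def by blast
  qed
  have P2: "a \<in> Som A X \<longrightarrow> X \<subset> lquot A a X"
  proof
    assume "a \<in> Som A X"
    then obtain u where u: "u \<in> lists A" "emb_minimal X (a # u)" unfolding Som_def by blast
    have "u \<in> lquot A a X" using u unfolding lquot_def emb_minimal_def by blast
    moreover have "u \<notin> X" using u unfolding emb_minimal_def by fastforce
    ultimately show "X \<subset> lquot A a X" using P1 by blast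
  qed
  have P3: "(X \<noteq> lists A \<and> (\<forall>b\<in>Som A X. lquot A b X \<subseteq> lquot A b Y)) \<longrightarrow> X \<subseteq> Y"
  proof (intro impI subsetI)
    fix x assume H: "X \<noteq> lists A \<and> (\<forall>b\<in>Som A X. lquot A b X \<subseteq> lquot A b Y)" and x: "x \<in> X"
    have "[] \<notin> X"
    proof
      assume "[] \<in> X"
      then have "lists A \<subseteq> X" using upX by blast
      then show False using H XA by blast
    qed
    obtain m where m: "emb_minimal X m" "subseq m x" using exists_min[OF x] by blast
    have mX: "m \<in> X" using m unfolding emb_minimal_def by blast
    then obtain b u where bu: "m = b # u" using \<open>[] \<notin> X\<close> by (cases m) auto
    have "m \<in> lists A" using mX XA by blast
    then have bA: "b \<in> A" "u \<in> lists A" using bu by auto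
    then have "b \<in> Som A X" using m bu unfolding Som_def by blast
    moreover have "u \<in> lquot A b X" using bA mX bu unfolding lquot_def by blast
    ultimately have "u \<in> lquot A b Y" using H by blast
    then have "m \<in> Y" using bu unfolding lquot_def by blast
    moreover have "x \<in> lists A" using x XA by blast
    ultimately show "x \<in> Y" using upY m by blast
  qed
  show ?thesis using P1 P2 P3 by blast
qed

end
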